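(* Let $(\mathcal A,\mathcal B_{\mathcal A})$ be a measurable space, $\mathbb P_{\mathcal A}$ the space of probability measures on it with the $\sigma$-field $\mathbb F_{\mathcal A}$ generated by the sets $\{\chi:\chi(A)<r\}$, $A\in\mathcal B_{\mathcal A}$, $r\in[0,1]$. Let $(\eta,X)$ be a jointly distributed pair with $X$ a $[0,1]$-valued random variable and $\eta$ a random element of $\mathbb P_{\mathcal A}$. If $\mathbb P(X=0)<1$, then there exists a random element $\chi$ of $\mathbb P_{\mathcal A}$, unique in law, such that $\chi\overset d=X\eta+(1-X)\tilde\chi$, where $\tilde\chi$ has the same law as $\chi$ and is independent of $(\eta,X)$. *)

theory Defs
  imports "HOL-Probability.Probability"
begin

definition mix_measure :: "'a measure \<Rightarrow> real \<Rightarrow> 'a measure \<Rightarrow> 'a measure \<Rightarrow> 'a measure" where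
  "mix_measure M x e v = measure_of (space M) (sets M)
     (\<lambda>A. ennreal x * emeasure e A + ennreal (1 - x) * emeasure v A)"

end

theory Submission
  imports Defs
begin


lemma suminf_swap_ennreal:
  fixes f :: "nat \<Rightarrow> nat \<Rightarrow> ennreal"
  shows "(\<Sum>k. \<Sum>i. f i k) = (\<Sum>i. \<Sum>k. f i k)"
proof -
  have "(\<Sum>k. \<Sum>i. f i k) = (\<integral>\<^sup>+k. (\<Sum>i. f i k) \<partial>count_space UNIV)"
    by (simp add: nn_integral_count_space_nat)
  also have "\<dots> = (\<Sum>i. \<integral>\<^sup>+k. f i k \<partial>count_space UNIV)"
    by (rule nn_integral_suminf) auto
  also have "\<dots> = (\<Sum>i. \<Sum>k. f i k)"
    by (simp add: nn_integral_count_space_nat)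
  finally show ?thesis .
qed

definition cmix :: "'a measure \<Rightarrow> (nat \<Rightarrow> ennreal) \<Rightarrow> (nat \<Rightarrow> 'a measure) \<Rightarrow> 'a measure" where
  "cmix M w K = measure_of (space M) (sets M) (\<lambda>A. \<Sum>i. w i * emeasure (K i) A)"

lemma cmix_sets: "sets (cmix M w K) = sets M"
  unfolding cmix_def by (simp add: sets.sets_measure_of_eq)

lemma cmix_emeasure:
  assumes K: "\<And>i. sets (K i) = sets M" and A: "A \<in> sets M"
  shows "emeasure (cmix M w K) A = (\<Sum>i. w i * emeasure (K i) A)"
  unfolding cmix_def
proof (rule emeasure_measure_of_sigma[OF _ _ _ A])
  show "sigma_algebra (space M) (sets M)" by (rule sets.sigma_algebra_axioms)
  show "positive (sets M) (\<lambda>A. \<Sum>i. w i * emeasure (K i) A)"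
    by (simp add: positive_def)
  show "countably_additive (sets M) (\<lambda>A. \<Sum>i. w i * emeasure (K i) A)"
    unfolding countably_additive_def
  proof (intro allI impI)
    fix B :: "nat \<Rightarrow> 'a set" assume B: "range B \<subseteq> sets M" "disjoint_family B" "\<Union> (range B) \<in> sets M"
    have "(\<Sum>k. \<Sum>i. w i * emeasure (K i) (B k)) = (\<Sum>i. \<Sum>k. w i * emeasure (K i) (B k))"
      by (rule suminf_swap_ennreal)
    also have "\<dots> = (\<Sum>i. w i * emeasure (K i) (\<Union> (range B)))"
    proof (rule suminf_cong)
      fix i
      have "emeasure (K i) (\<Union> (range B)) = (\<Sum>k. emeasure (K i) (B k))"
        using B K[of i] by (intro suminf_emeasure[symmetric]) auto
      then show "(\<Sum>k. w i * emeasure (K i) (B k)) = w i * emeasure (K i) (\<Union> (range B))"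
        by simp
    qed
    finally show "(\<Sum>k. \<Sum>i. w i * emeasure (K i) (B k)) = (\<Sum>i. w i * emeasure (K i) (\<Union> (range B)))" .
  qed
qed

lemma mix_sets: "sets (mix_measure M x e v) = sets M"
  unfolding mix_measure_def by (simp add: sets.sets_measure_of_eq)

lemma mix_emeasure:
  assumes K: "sets e = sets M" "sets v = sets M" and A: "A \<in> sets M"
  shows "emeasure (mix_measure M x e v) A = ennreal x * emeasure e A + ennreal (1 - x) * emeasure v A"
  unfolding mix_measure_def
proof (rule emeasure_measure_of_sigma[OF _ _ _ A])
  show "sigma_algebra (space M) (sets M)" by (rule sets.sigma_algebra_axioms)
  show "positive (sets M) (\<lambda>A. ennreal x * emeasure e A + ennreal (1 - x) * emeasure v A)"
    by (simp add: positive_def)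
  show "countably_additive (sets M) (\<lambda>A. ennreal x * emeasure e A + ennreal (1 - x) * emeasure v A)"
    unfolding countably_additive_def
  proof (intro allI impI)
    fix B :: "nat \<Rightarrow> 'a set" assume B: "range B \<subseteq> sets M" "disjoint_family B" "\<Union> (range B) \<in> sets M"
    have e: "emeasure e (\<Union> (range B)) = (\<Sum>k. emeasure e (B k))"
      using B K by (intro suminf_emeasure[symmetric]) auto
    have v: "emeasure v (\<Union> (range B)) = (\<Sum>k. emeasure v (B k))"
      using B K by (intro suminf_emeasure[symmetric]) auto
    show "(\<Sum>k. ennreal x * emeasure e (B k) + ennreal (1 - x) * emeasure v (B k)) =
         ennreal x * emeasure e (\<Union> (range B)) + ennreal (1 - x) * emeasure v (\<Union> (range B))"
      unfolding e v by (simp add: suminf_add[symmetric])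
  qed
qed

lemma mix_in_space:
  assumes e: "e \<in> space (prob_algebra M)" and v: "v \<in> space (prob_algebra M)" and x: "0 \<le> x" "x \<le> 1"
  shows "mix_measure M x e v \<in> space (prob_algebra M)"
proof -
  have se: "sets e = sets M" "prob_space e" and sv: "sets v = sets M" "prob_space v"
    using e v by (auto simp: space_prob_algebra)
  have "emeasure (mix_measure M x e v) (space (mix_measure M x e v)) = 1"
  proof -
    have sp: "space (mix_measure M x e v) = space M" unfolding mix_measure_def by simp
    have "emeasure e (space M) = 1" "emeasure v (space M) = 1"
      using se sv by (metis prob_space.emeasure_space_1 sets_eq_imp_space_eq)+
    then show ?thesis using sp mix_emeasure[OF se(1) sv(1) sets.top[of M]] x
      by (simp add: ennreal_plus[symmetric] del: ennreal_plus)
  qed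
  then show ?thesis by (auto simp: space_prob_algebra mix_sets intro!: prob_spaceI)
qed

lemma mix_measure_real:
  assumes e: "e \<in> space (prob_algebra M)" and v: "v \<in> space (prob_algebra M)" and x: "0 \<le> x" "x \<le> 1"
    and A: "A \<in> sets M"
  shows "measure (mix_measure M x e v) A = x * measure e A + (1 - x) * measure v A"
proof -
  have se: "sets e = sets M" "prob_space e" and sv: "sets v = sets M" "prob_space v"
    using e v by (auto simp: space_prob_algebra)
  have "emeasure (mix_measure M x e v) A = ennreal (x * measure e A + (1 - x) * measure v A)"
  proof -
    have "emeasure e A = ennreal (measure e A)" "emeasure v A = ennreal (measure v A)"
      using se sv by (simp_all add: prob_space.finite_measure finite_measure.emeasure_eq_measure)
    then show ?thesis
      using mix_emeasure[OF se(1) sv(1) A] x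
      by (simp add: ennreal_mult[symmetric] ennreal_plus[symmetric] del: ennreal_plus)
  qed
  moreover have "0 \<le> x * measure e A + (1 - x) * measure v A" using x by simp
  ultimately show ?thesis
    by (metis enn2real_ennreal measure_def)
qed

lemma measurable_emeasure_prob_algebra[measurable]:
  "a \<in> sets A \<Longrightarrow> (\<lambda>M. emeasure M a) \<in> borel_measurable (prob_algebra A)"
  unfolding prob_algebra_def by (intro measurable_restrict_space1 measurable_emeasure_subprob_algebra)



locale fx =
  fixes M :: "'a measure" and P :: "'w measure" and \<eta> :: "'w \<Rightarrow> 'a measure" and X :: "'w \<Rightarrow> real"
  assumes P: "prob_space P" and eta: "\<eta> \<in> measurable P (prob_algebra M)"
    and Xm: "X \<in> measurable P (restrict_space borel {0..1})"
    and X0: "measure P {\<omega> \<in> space P. X \<omega> = 0} < 1"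
begin

abbreviation "PA \<equiv> prob_algebra M"
abbreviation "II \<equiv> restrict_space (borel :: real measure) {0..1}"

definition "Q = distr P (PA \<Otimes>\<^sub>M II) (\<lambda>\<omega>. (\<eta> \<omega>, X \<omega>))"
definition F :: "('a measure \<times> real) \<times> 'a measure \<Rightarrow> 'a measure" where
  "F = (\<lambda>((e, x), v). mix_measure M x e v)"

lemma Xm': "X \<in> borel_measurable P"
  using Xm measurable_restrict_space2_iff by blast

lemma X01: "\<omega> \<in> space P \<Longrightarrow> 0 \<le> X \<omega> \<and> X \<omega> \<le> 1"
  using measurable_space[OF Xm] by (auto simp: space_restrict_space)

lemma Q_meas: "(\<lambda>\<omega>. (\<eta> \<omega>, X \<omega>)) \<in> P \<rightarrow>\<^sub>M PA \<Otimes>\<^sub>M II"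
  using eta Xm by measurable

lemma Q_prob: "prob_space Q"
  unfolding Q_def by (rule prob_space.prob_space_distr[OF P Q_meas])

lemma sets_Q: "sets Q = sets (PA \<Otimes>\<^sub>M II)" and space_Q: "space Q = space (PA \<Otimes>\<^sub>M II)"
  by (simp_all add: Q_def)

lemma space_PAI: "z \<in> space (PA \<Otimes>\<^sub>M II) \<Longrightarrow> fst z \<in> space PA \<and> 0 \<le> snd z \<and> snd z \<le> 1"
  by (auto simp: space_pair_measure space_restrict_space)

lemma II_meas[measurable]: "(\<lambda>x. x) \<in> II \<rightarrow>\<^sub>M borel"
  by (rule measurable_restrict_space1) simp

lemma F_in_space: "z \<in> space ((PA \<Otimes>\<^sub>M II) \<Otimes>\<^sub>M PA) \<Longrightarrow> F z \<in> space PA"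
  by (auto simp: F_def space_pair_measure space_restrict_space intro!: mix_in_space)

lemma F_meas0: "F \<in> ((PA \<Otimes>\<^sub>M II) \<Otimes>\<^sub>M PA) \<rightarrow>\<^sub>M PA"
proof (rule measurable_prob_algebra_generated[where \<Omega>="space M" and G="sets M"])
  show "sets M = sigma_sets (space M) (sets M)" by (simp add: sets.sigma_sets_eq)
  show "Int_stable (sets M)" by (auto simp: Int_stable_def)
  show "sets M \<subseteq> Pow (space M)" by (rule sets.space_closed)
  fix z assume z: "z \<in> space ((PA \<Otimes>\<^sub>M II) \<Otimes>\<^sub>M PA)"
  then show "prob_space (F z)" "sets (F z) = sets M"
    using F_in_space[OF z] by (auto simp: space_prob_algebra)
next
  fix A assume A: "A \<in> sets M"
  have "(\<lambda>z. ennreal (snd (fst z)) * emeasure (fst (fst z)) A + ennreal (1 - snd (fst z)) * emeasure (snd z) A)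
      \<in> borel_measurable ((PA \<Otimes>\<^sub>M II) \<Otimes>\<^sub>M PA)"
    using A by measurable
  then show "(\<lambda>z. emeasure (F z) A) \<in> borel_measurable ((PA \<Otimes>\<^sub>M II) \<Otimes>\<^sub>M PA)"
    by (rule measurable_cong[THEN iffD1, rotated])
       (auto simp: F_def space_pair_measure space_prob_algebra A mix_emeasure)
qed

lemma F_meas: "sets N = sets PA \<Longrightarrow> F \<in> (Q \<Otimes>\<^sub>M N) \<rightarrow>\<^sub>M PA"
  using F_meas0 by (simp add: sets_Q cong: measurable_cong_sets sets_pair_measure_cong)

end


lemma suminf_Suc_ennreal: "(\<Sum>i. f i) = f 0 + (\<Sum>i. f (Suc i) :: ennreal)"
  using suminf_offset[of f 1] by (simp add: add.commute)

context fx begin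

abbreviation "SS \<equiv> stream_space Q"

definition "e0 = \<eta> (SOME \<omega>. \<omega> \<in> space P)"

lemma e0: "e0 \<in> space PA"
proof -
  have "space P \<noteq> {}" using prob_space.not_empty[OF P] .
  then have "(SOME \<omega>. \<omega> \<in> space P) \<in> space P" by (simp add: some_in_eq)
  then show ?thesis unfolding e0_def using measurable_space[OF eta] by blast
qed

definition wt :: "('a measure \<times> real) stream \<Rightarrow> nat \<Rightarrow> real" where
  "wt s i = snd (s !! i) * (\<Prod>j<i. 1 - snd (s !! j))"
definition "W s = (\<Sum>i. ennreal (wt s i))"
definition "ww s = case_nat (1 - W s) (\<lambda>i. ennreal (wt s i))"
definition "KK s = case_nat e0 (\<lambda>i. fst (s !! i))"
definition "chi s = cmix M (ww s) (KK s)"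

lemma space_SS: "s \<in> space SS \<Longrightarrow> s !! i \<in> space (PA \<Otimes>\<^sub>M II)"
  by (auto simp: space_stream_space streams_iff_snth space_Q)

lemma snth01: "s \<in> space SS \<Longrightarrow> fst (s !! i) \<in> space PA \<and> 0 \<le> snd (s !! i) \<and> snd (s !! i) \<le> 1"
  using space_PAI[OF space_SS] by blast

lemma wt_nonneg: "s \<in> space SS \<Longrightarrow> 0 \<le> wt s i"
  unfolding wt_def using snth01 by (auto intro!: mult_nonneg_nonneg prod_nonneg)

lemma wt_partial: "s \<in> space SS \<Longrightarrow> (\<Sum>i<n. wt s i) = 1 - (\<Prod>j<n. 1 - snd (s !! j))"
  by (induction n) (auto simp: wt_def algebra_simps)

lemma W_le1: assumes s: "s \<in> space SS" shows "W s \<le> 1"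
  unfolding W_def suminf_eq_SUP
proof (rule SUP_least)
  fix n
  have "(\<Sum>i<n. ennreal (wt s i)) = ennreal (\<Sum>i<n. wt s i)"
    using wt_nonneg[OF s] by (simp add: sum_ennreal)
  also have "\<dots> \<le> 1"
    using wt_partial[OF s, of n] snth01[OF s] by (auto intro!: prod_nonneg)
  finally show "(\<Sum>i<n. ennreal (wt s i)) \<le> 1" .
qed

lemma wt_Stream0: "wt (x ## s) 0 = snd x"
  by (simp add: wt_def)

lemma wt_StreamSuc: "wt (x ## s) (Suc i) = (1 - snd x) * wt s i"
  unfolding wt_def by (subst prod.lessThan_Suc_shift) simp

lemma W_Stream:
  assumes x: "0 \<le> snd x" "snd x \<le> 1" and s: "s \<in> space SS"
  shows "W (x ## s) = ennreal (snd x) + ennreal (1 - snd x) * W s"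
  unfolding W_def
  apply (subst suminf_Suc_ennreal)
  using x wt_nonneg[OF s] by (simp add: wt_Stream0 wt_StreamSuc ennreal_mult)

end


lemma ennreal_shift_arith:
  fixes a :: real and W :: ennreal
  assumes a: "0 \<le> a" "a \<le> 1" and W: "W \<le> 1"
  shows "1 - (ennreal a + ennreal (1 - a) * W) = ennreal (1 - a) * (1 - W)"
proof -
  obtain w where w: "W = ennreal w" "0 \<le> w"
    using W by (cases W) (auto simp: top_unique)
  have w1: "w \<le> 1" using W w by (simp add: ennreal_le_1)
  have "ennreal a + ennreal (1 - a) * W = ennreal (a + (1 - a) * w)"
    using a w by (simp add: ennreal_mult ennreal_plus)
  moreover have "1 - ennreal (a + (1 - a) * w) = ennreal (1 - (a + (1 - a) * w))"
    using a w by (metis ennreal_1 ennreal_minus add_nonneg_nonneg mult_nonneg_nonneg diff_ge_0_iff_ge)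
  moreover have "1 - W = ennreal (1 - w)"
    using w by (metis ennreal_1 ennreal_minus)
  moreover have "ennreal (1 - a) * ennreal (1 - w) = ennreal ((1 - a) * (1 - w))"
    using a w1 by (simp add: ennreal_mult)
  ultimately show ?thesis by (simp add: algebra_simps)
qed

context fx begin

lemma KK_space: "s \<in> space SS \<Longrightarrow> KK s i \<in> space PA"
  using e0 snth01 by (cases i) (auto simp: KK_def)

lemma KK_sets: "s \<in> space SS \<Longrightarrow> sets (KK s i) = sets M"
  using KK_space by (auto simp: space_prob_algebra)

lemma ww_sum: assumes s: "s \<in> space SS" shows "(\<Sum>i. ww s i) = 1"
  using W_le1[OF s] by (subst suminf_Suc_ennreal) (simp add: ww_def W_def[symmetric] diff_add_cancel_ennreal)

lemma chi_emeasure: "s \<in> space SS \<Longrightarrow> A \<in> sets M \<Longrightarrow> emeasure (chi s) A = (\<Sum>i. ww s i * emeasure (KK s i) A)"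
  unfolding chi_def by (rule cmix_emeasure[OF KK_sets])

lemma chi_space: assumes s: "s \<in> space SS" shows "chi s \<in> space PA"
proof -
  have "emeasure (chi s) (space M) = (\<Sum>i. ww s i * emeasure (KK s i) (space M))"
    using chi_emeasure[OF s] by simp
  also have "\<dots> = (\<Sum>i. ww s i)"
    using in_space_prob_algebra[OF KK_space[OF s]] by simp
  finally have "emeasure (chi s) (space M) = 1" using ww_sum[OF s] by simp
  moreover have "space (chi s) = space M" unfolding chi_def cmix_def by simp
  ultimately show ?thesis
    by (auto simp: space_prob_algebra chi_def cmix_sets intro!: prob_spaceI)
qed

lemma Stream_space: "x \<in> space (PA \<Otimes>\<^sub>M II) \<Longrightarrow> s \<in> space SS \<Longrightarrow> x ## s \<in> space SS"
  by (simp add: space_stream_space space_Q)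

lemma chi_Stream:
  assumes x: "x \<in> space (PA \<Otimes>\<^sub>M II)" and s: "s \<in> space SS"
  shows "chi (x ## s) = mix_measure M (snd x) (fst x) (chi s)"
proof (rule measure_eqI)
  have xs: "x ## s \<in> space SS" by (rule Stream_space[OF x s])
  have x01: "0 \<le> snd x" "snd x \<le> 1" "fst x \<in> space PA" using space_PAI[OF x] by auto
  show "sets (chi (x ## s)) = sets (mix_measure M (snd x) (fst x) (chi s))"
    by (simp add: chi_def cmix_sets mix_sets)
  fix A assume "A \<in> sets (chi (x ## s))"
  then have A: "A \<in> sets M" by (simp add: chi_def cmix_sets)
  have eq1: "1 - W (x ## s) = ennreal (1 - snd x) * (1 - W s)"
    using W_Stream[OF x01(1,2) s] ennreal_shift_arith[OF x01(1,2) W_le1[OF s]] by simp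
  have "emeasure (chi (x ## s)) A = (1 - W (x ## s)) * emeasure e0 A +
      (ennreal (snd x) * emeasure (fst x) A + (\<Sum>k. ennreal (1 - snd x) * (ennreal (wt s k) * emeasure (fst (s !! k)) A)))"
    unfolding chi_emeasure[OF xs A]
    apply (subst suminf_Suc_ennreal)
    apply (subst suminf_Suc_ennreal)
    using x01 wt_nonneg[OF s]
    by (simp add: ww_def KK_def wt_Stream0 wt_StreamSuc ennreal_mult mult.assoc)
  also have "\<dots> = ennreal (snd x) * emeasure (fst x) A + ennreal (1 - snd x) * emeasure (chi s) A"
    unfolding chi_emeasure[OF s A] eq1
    apply (subst (2) suminf_Suc_ennreal)
    by (simp add: ww_def KK_def distrib_left add_ac mult.assoc)
  also have "\<dots> = emeasure (mix_measure M (snd x) (fst x) (chi s)) A"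
    using x01 chi_space[OF s] A by (simp add: mix_emeasure space_prob_algebra)
  finally show "emeasure (chi (x ## s)) A = emeasure (mix_measure M (snd x) (fst x) (chi s)) A" .
qed

end


lemma emeasure_distr_int:
  assumes f: "f \<in> N \<rightarrow>\<^sub>M K" and B: "B \<in> sets K"
  shows "emeasure (distr N K f) B = (\<integral>\<^sup>+x. indicator B (f x) \<partial>N)"
proof -
  have "emeasure (distr N K f) B = (\<integral>\<^sup>+v. indicator B v \<partial>distr N K f)"
    using B by (simp add: nn_integral_indicator)
  also have "\<dots> = (\<integral>\<^sup>+x. indicator B (f x) \<partial>N)"
    using f B by (subst nn_integral_distr) (auto intro: borel_measurable_indicator)
  finally show ?thesis .
qed

context fx begin

lemma snth_meas[measurable]: "(\<lambda>s. s !! i) \<in> SS \<rightarrow>\<^sub>M PA \<Otimes>\<^sub>M II"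
  using measurable_snth[of i Q] by (simp add: sets_Q cong: measurable_cong_sets)

lemma wt_meas[measurable]: "(\<lambda>s. wt s i) \<in> borel_measurable SS"
  unfolding wt_def by measurable

lemma W_meas[measurable]: "W \<in> borel_measurable SS"
  unfolding W_def by measurable

lemma chi_meas[measurable]: "chi \<in> SS \<rightarrow>\<^sub>M PA"
proof (rule measurable_prob_algebra_generated[where \<Omega>="space M" and G="sets M"])
  show "sets M = sigma_sets (space M) (sets M)" by (simp add: sets.sigma_sets_eq)
  show "Int_stable (sets M)" by (auto simp: Int_stable_def)
  show "sets M \<subseteq> Pow (space M)" by (rule sets.space_closed)
  fix s assume s: "s \<in> space SS"
  then show "prob_space (chi s)" "sets (chi s) = sets M"
    using chi_space[OF s] by (auto simp: space_prob_algebra)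
next
  fix A assume A: "A \<in> sets M"
  have "\<And>i. (\<lambda>s. ww s i * emeasure (KK s i) A) \<in> borel_measurable SS"
  proof -
    fix i show "(\<lambda>s. ww s i * emeasure (KK s i) A) \<in> borel_measurable SS"
      using A by (cases i) (simp_all add: ww_def KK_def)
  qed
  then have "(\<lambda>s. \<Sum>i. ww s i * emeasure (KK s i) A) \<in> borel_measurable SS"
    by (rule borel_measurable_suminf_order[where f="\<lambda>i s. ww s i * emeasure (KK s i) A"])
  then show "(\<lambda>s. emeasure (chi s) A) \<in> borel_measurable SS"
    by (rule measurable_cong[THEN iffD1, rotated]) (simp add: chi_emeasure A)
qed

definition "Lx = distr SS PA chi"

lemma Lx_prob: "prob_space Lx"
  unfolding Lx_def by (rule prob_space.prob_space_distr[OF prob_space.prob_space_stream_space[OF Q_prob] chi_meas])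

lemma Lx_sets: "sets Lx = sets PA" by (simp add: Lx_def)

lemma F_Pair: "q \<in> space (PA \<Otimes>\<^sub>M II) \<Longrightarrow> F (q, v) = mix_measure M (snd q) (fst q) v"
  by (simp add: F_def split_beta)

lemma F_Pair_meas: "q \<in> space (PA \<Otimes>\<^sub>M II) \<Longrightarrow> (\<lambda>v. F (q, v)) \<in> PA \<rightarrow>\<^sub>M PA"
  using measurable_compose[OF measurable_Pair1'[of q "PA \<Otimes>\<^sub>M II" PA] F_meas0] by simp

lemma Lx_fixed: "Lx = distr (Q \<Otimes>\<^sub>M Lx) PA F"
proof (rule measure_eqI)
  show "sets Lx = sets (distr (Q \<Otimes>\<^sub>M Lx) PA F)" by (simp add: Lx_def)
  fix B assume "B \<in> sets Lx"
  then have B[measurable]: "B \<in> sets PA" by (simp add: Lx_def)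
  interpret Lxp: prob_space Lx by (rule Lx_prob)
  interpret Qp: prob_space Q by (rule Q_prob)
  have "emeasure Lx B = (\<integral>\<^sup>+s. indicator B (chi s) \<partial>SS)"
    unfolding Lx_def by (rule emeasure_distr_int[OF chi_meas B])
  also have "\<dots> = (\<integral>\<^sup>+q. \<integral>\<^sup>+s. indicator B (chi (q ## s)) \<partial>SS \<partial>Q)"
    by (intro Qp.nn_integral_stream_space) measurable
  also have "\<dots> = (\<integral>\<^sup>+q. \<integral>\<^sup>+s. indicator B (F (q, chi s)) \<partial>SS \<partial>Q)"
    by (intro nn_integral_cong) (simp add: chi_Stream F_Pair space_Q)
  also have "\<dots> = (\<integral>\<^sup>+q. \<integral>\<^sup>+v. indicator B (F (q, v)) \<partial>Lx \<partial>Q)"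
  proof (intro nn_integral_cong)
    fix q assume "q \<in> space Q"
    then have q: "q \<in> space (PA \<Otimes>\<^sub>M II)" by (simp add: space_Q)
    have [measurable]: "(\<lambda>v. F (q, v)) \<in> PA \<rightarrow>\<^sub>M PA" by (rule F_Pair_meas[OF q])
    show "(\<integral>\<^sup>+s. indicator B (F (q, chi s)) \<partial>SS) = (\<integral>\<^sup>+v. indicator B (F (q, v)) \<partial>Lx)"
      unfolding Lx_def using B by (subst nn_integral_distr) auto
  qed
  also have "\<dots> = (\<integral>\<^sup>+z. indicator B (F z) \<partial>(Q \<Otimes>\<^sub>M Lx))"
  proof (rule Lxp.nn_integral_fst)
    have [measurable]: "F \<in> Q \<Otimes>\<^sub>M Lx \<rightarrow>\<^sub>M PA" by (rule F_meas[OF Lx_sets])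
    show "(\<lambda>z. indicator B (F z)) \<in> borel_measurable (Q \<Otimes>\<^sub>M Lx)" using B by measurable
  qed
  also have "\<dots> = emeasure (distr (Q \<Otimes>\<^sub>M Lx) PA F) B"
    by (rule emeasure_distr_int[OF F_meas[OF Lx_sets] B, symmetric])
  finally show "emeasure Lx B = emeasure (distr (Q \<Otimes>\<^sub>M Lx) PA F) B" .
qed

end


lemma distr_pair_snd':
  assumes "prob_space L1" "prob_space L2"
  shows "distr (L1 \<Otimes>\<^sub>M L2) L2 snd = L2"
proof (intro measure_eqI)
  fix A assume A: "A \<in> sets (distr (L1 \<Otimes>\<^sub>M L2) L2 snd)"
  from A have "emeasure (distr (L1 \<Otimes>\<^sub>M L2) L2 snd) A = emeasure (L1 \<Otimes>\<^sub>M L2) (space L1 \<times> A)"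
    by (auto simp add: emeasure_distr space_pair_measure dest: sets.sets_into_space intro!: arg_cong2[where f=emeasure])
  with A show "emeasure (distr (L1 \<Otimes>\<^sub>M L2) L2 snd) A = emeasure L2 A"
    using assms
    by (simp add: prob_space.emeasure_space_1 sigma_finite_measure.emeasure_pair_measure_Times
        prob_space_imp_sigma_finite)
qed simp

context fx begin

definition "fixd L \<longleftrightarrow> prob_space L \<and> sets L = sets PA \<and> L = distr (Q \<Otimes>\<^sub>M L) PA F"

definition "coup L1 L2 J \<longleftrightarrow> prob_space J \<and> sets J = sets (PA \<Otimes>\<^sub>M PA) \<and>
   distr J PA fst = L1 \<and> distr J PA snd = L2"

definition G2 :: "('a measure \<times> real) \<times> ('a measure \<times> 'a measure) \<Rightarrow> 'a measure \<times> 'a measure" where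
  "G2 z = (F (fst z, fst (snd z)), F (fst z, snd (snd z)))"

definition "T2 J = distr (Q \<Otimes>\<^sub>M J) (PA \<Otimes>\<^sub>M PA) G2"

lemma F_meas0'[measurable]: "F \<in> ((PA \<Otimes>\<^sub>M II) \<Otimes>\<^sub>M PA) \<rightarrow>\<^sub>M PA"
  by (rule F_meas0)

lemma G2_meas0: "G2 \<in> (PA \<Otimes>\<^sub>M II) \<Otimes>\<^sub>M (PA \<Otimes>\<^sub>M PA) \<rightarrow>\<^sub>M PA \<Otimes>\<^sub>M PA"
  unfolding G2_def by measurable

lemma G2_meas: "sets J = sets (PA \<Otimes>\<^sub>M PA) \<Longrightarrow> G2 \<in> Q \<Otimes>\<^sub>M J \<rightarrow>\<^sub>M PA \<Otimes>\<^sub>M PA"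
  using G2_meas0 by (simp add: sets_Q cong: measurable_cong_sets sets_pair_measure_cong)

lemma marg:
  assumes J: "sets J = sets (PA \<Otimes>\<^sub>M PA)" "prob_space J" and p: "p \<in> PA \<Otimes>\<^sub>M PA \<rightarrow>\<^sub>M PA"
    and L: "distr J PA p = L"
  shows "distr (Q \<Otimes>\<^sub>M J) PA (\<lambda>z. F (fst z, p (snd z))) = distr (Q \<Otimes>\<^sub>M L) PA F"
proof -
  have pJ: "p \<in> J \<rightarrow>\<^sub>M PA" using p J by (simp cong: measurable_cong_sets)
  have sfL: "sigma_finite_measure (distr J PA p)"
    by (rule prob_space_imp_sigma_finite[OF prob_space.prob_space_distr[OF J(2) pJ]])
  have "Q \<Otimes>\<^sub>M L = distr Q Q (\<lambda>x. x) \<Otimes>\<^sub>M distr J PA p"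
    using L by (simp add: distr_id2)
  also have "\<dots> = distr (Q \<Otimes>\<^sub>M J) (Q \<Otimes>\<^sub>M PA) (\<lambda>(x, y). (x, p y))"
    by (rule pair_measure_distr[OF measurable_ident_sets[OF refl] pJ sfL])
  finally have eq: "Q \<Otimes>\<^sub>M L = distr (Q \<Otimes>\<^sub>M J) (Q \<Otimes>\<^sub>M PA) (\<lambda>(x, y). (x, p y))" .
  have m1: "(\<lambda>(x, y). (x, p y)) \<in> Q \<Otimes>\<^sub>M J \<rightarrow>\<^sub>M Q \<Otimes>\<^sub>M PA"
    using pJ by measurable
  have "distr (Q \<Otimes>\<^sub>M L) PA F = distr (Q \<Otimes>\<^sub>M J) PA (F \<circ> (\<lambda>(x, y). (x, p y)))"
    unfolding eq by (rule distr_distr[OF F_meas[of PA] m1]) simp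
  also have "\<dots> = distr (Q \<Otimes>\<^sub>M J) PA (\<lambda>z. F (fst z, p (snd z)))"
    by (rule distr_cong) (auto simp: split_beta)
  finally show ?thesis ..
qed

lemma coup_T2:
  assumes c: "coup L1 L2 J" and f1: "fixd L1" and f2: "fixd L2"
  shows "coup L1 L2 (T2 J)"
proof -
  have J: "sets J = sets (PA \<Otimes>\<^sub>M PA)" "prob_space J" "distr J PA fst = L1" "distr J PA snd = L2"
    using c by (auto simp: coup_def)
  have G: "G2 \<in> Q \<Otimes>\<^sub>M J \<rightarrow>\<^sub>M PA \<Otimes>\<^sub>M PA" by (rule G2_meas[OF J(1)])
  have pr: "prob_space (T2 J)"
    unfolding T2_def by (rule prob_space.prob_space_distr[OF prob_space_pair[OF Q_prob J(2)] G])
  have "distr (T2 J) PA fst = distr (Q \<Otimes>\<^sub>M J) PA (fst \<circ> G2)"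
    unfolding T2_def by (rule distr_distr[OF measurable_fst G])
  also have "\<dots> = distr (Q \<Otimes>\<^sub>M J) PA (\<lambda>z. F (fst z, fst (snd z)))"
    by (rule distr_cong) (auto simp: G2_def)
  also have "\<dots> = distr (Q \<Otimes>\<^sub>M L1) PA F"
    by (rule marg[OF J(1,2) measurable_fst J(3)])
  also have "\<dots> = L1" using f1 by (simp add: fixd_def)
  finally have 1: "distr (T2 J) PA fst = L1" .
  have "distr (T2 J) PA snd = distr (Q \<Otimes>\<^sub>M J) PA (snd \<circ> G2)"
    unfolding T2_def by (rule distr_distr[OF measurable_snd G])
  also have "\<dots> = distr (Q \<Otimes>\<^sub>M J) PA (\<lambda>z. F (fst z, snd (snd z)))"
    by (rule distr_cong) (auto simp: G2_def)
  also have "\<dots> = distr (Q \<Otimes>\<^sub>M L2) PA F"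
    by (rule marg[OF J(1,2) measurable_snd J(4)])
  also have "\<dots> = L2" using f2 by (simp add: fixd_def)
  finally have 2: "distr (T2 J) PA snd = L2" .
  show ?thesis using pr 1 2 by (simp add: coup_def T2_def)
qed

lemma coup_0:
  assumes f1: "fixd L1" and f2: "fixd L2"
  shows "coup L1 L2 (L1 \<Otimes>\<^sub>M L2)"
proof -
  have L: "prob_space L1" "sets L1 = sets PA" "prob_space L2" "sets L2 = sets PA"
    using f1 f2 by (auto simp: fixd_def)
  interpret L2p: prob_space L2 by (rule L(3))
  have "distr (L1 \<Otimes>\<^sub>M L2) PA fst = distr (L1 \<Otimes>\<^sub>M L2) L1 fst"
    using L by (intro distr_cong) auto
  also have "\<dots> = L1" by (rule L2p.distr_pair_fst)
  finally have 1: "distr (L1 \<Otimes>\<^sub>M L2) PA fst = L1" .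
  have "distr (L1 \<Otimes>\<^sub>M L2) PA snd = distr (L1 \<Otimes>\<^sub>M L2) L2 snd"
    using L by (intro distr_cong) auto
  also have "\<dots> = L2" by (rule distr_pair_snd'[OF L(1,3)])
  finally have 2: "distr (L1 \<Otimes>\<^sub>M L2) PA snd = L2" .
  show ?thesis using 1 2 L prob_space_pair[OF L(1,3)]
    by (simp add: coup_def cong: sets_pair_measure_cong)
qed

end


context fx begin

definition dd :: "'a set set \<Rightarrow> 'a measure \<times> 'a measure \<Rightarrow> real" where
  "dd H w = (\<Sum>A\<in>H. \<bar>measure (fst w) A - measure (snd w) A\<bar>)"

lemma dd_meas: assumes H: "H \<subseteq> sets M" shows "(\<lambda>w. dd H w) \<in> borel_measurable (PA \<Otimes>\<^sub>M PA)"
  unfolding dd_def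
proof (rule borel_measurable_sum)
  fix A assume "A \<in> H"
  then have [measurable]: "A \<in> sets M" using H by auto
  show "(\<lambda>w. \<bar>measure (fst w) A - measure (snd w) A\<bar>) \<in> borel_measurable (PA \<Otimes>\<^sub>M PA)"
    by measurable
qed

lemma dd_nonneg: "0 \<le> dd H w" unfolding dd_def by (auto intro: sum_nonneg)

lemma dd_le: assumes w: "w \<in> space (PA \<Otimes>\<^sub>M PA)" shows "dd H w \<le> real (card H)"
proof -
  have p: "prob_space (fst w)" "prob_space (snd w)" using w by (auto simp: space_pair_measure space_prob_algebra)
  have "dd H w \<le> real (card H) * 1"
    unfolding dd_def
  proof (rule sum_bounded_above)
    fix A
    have "0 \<le> measure (fst w) A" "measure (fst w) A \<le> 1" "0 \<le> measure (snd w) A" "measure (snd w) A \<le> 1"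
      using p by (auto simp: prob_space.prob_le_1)
    then show "\<bar>measure (fst w) A - measure (snd w) A\<bar> \<le> 1" by linarith
  qed
  then show ?thesis by simp
qed

lemma dd_G2:
  assumes z: "z \<in> space ((PA \<Otimes>\<^sub>M II) \<Otimes>\<^sub>M (PA \<Otimes>\<^sub>M PA))" and H: "H \<subseteq> sets M"
  shows "dd H (G2 z) = (1 - snd (fst z)) * dd H (snd z)"
proof -
  have q: "fst z \<in> space (PA \<Otimes>\<^sub>M II)" and v: "fst (snd z) \<in> space PA" "snd (snd z) \<in> space PA"
    using z by (auto simp: space_pair_measure)
  have x: "fst (fst z) \<in> space PA" "0 \<le> snd (fst z)" "snd (fst z) \<le> 1" using space_PAI[OF q] by auto
  have "dd H (G2 z) = (\<Sum>A\<in>H. (1 - snd (fst z)) * \<bar>measure (fst (snd z)) A - measure (snd (snd z)) A\<bar>)"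
    unfolding dd_def G2_def
  proof (intro sum.cong refl)
    fix A assume "A \<in> H" then have A: "A \<in> sets M" using H by auto
    have "measure (F (fst z, fst (snd z))) A - measure (F (fst z, snd (snd z))) A
        = (1 - snd (fst z)) * (measure (fst (snd z)) A - measure (snd (snd z)) A)"
      using mix_measure_real[OF x(1) v(1) x(2,3) A] mix_measure_real[OF x(1) v(2) x(2,3) A]
      by (simp add: F_Pair[OF q] algebra_simps)
    then show "\<bar>measure (fst (F (fst z, fst (snd z)), F (fst z, snd (snd z)))) A -
            measure (snd (F (fst z, fst (snd z)), F (fst z, snd (snd z)))) A\<bar> =
         (1 - snd (fst z)) * \<bar>measure (fst (snd z)) A - measure (snd (snd z)) A\<bar>"
      using x by (simp add: abs_mult)
  qed
  then show ?thesis by (simp add: dd_def sum_distrib_left)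
qed

definition "cc = (\<integral>\<^sup>+q. ennreal (1 - snd q) \<partial>Q)"

lemma DJ_T2:
  assumes J: "sets J = sets (PA \<Otimes>\<^sub>M PA)" "prob_space J" and H: "H \<subseteq> sets M"
  shows "(\<integral>\<^sup>+w. ennreal (dd H w) \<partial>T2 J) = cc * (\<integral>\<^sup>+w. ennreal (dd H w) \<partial>J)"
proof -
  interpret Jp: prob_space J by (rule J(2))
  have ddm[measurable]: "(\<lambda>w. dd H w) \<in> borel_measurable (PA \<Otimes>\<^sub>M PA)" by (rule dd_meas[OF H])
  have ddJ[measurable]: "(\<lambda>w. dd H w) \<in> borel_measurable J"
    using ddm J(1) by (simp cong: measurable_cong_sets)
  have G: "G2 \<in> Q \<Otimes>\<^sub>M J \<rightarrow>\<^sub>M PA \<Otimes>\<^sub>M PA" by (rule G2_meas[OF J(1)])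
  have "(\<integral>\<^sup>+w. ennreal (dd H w) \<partial>T2 J) = (\<integral>\<^sup>+z. ennreal (dd H (G2 z)) \<partial>(Q \<Otimes>\<^sub>M J))"
    unfolding T2_def using G by (subst nn_integral_distr) auto
  also have "\<dots> = (\<integral>\<^sup>+z. ennreal (1 - snd (fst z)) * ennreal (dd H (snd z)) \<partial>(Q \<Otimes>\<^sub>M J))"
  proof (intro nn_integral_cong)
    fix z assume "z \<in> space (Q \<Otimes>\<^sub>M J)"
    then have z: "z \<in> space ((PA \<Otimes>\<^sub>M II) \<Otimes>\<^sub>M (PA \<Otimes>\<^sub>M PA))"
      using J(1) sets_eq_imp_space_eq[OF J(1)] by (simp add: space_pair_measure space_Q)
    have "0 \<le> 1 - snd (fst z)" using z space_PAI[of "fst z"] by (auto simp: space_pair_measure)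
    then show "ennreal (dd H (G2 z)) = ennreal (1 - snd (fst z)) * ennreal (dd H (snd z))"
      by (simp add: dd_G2[OF z H] ennreal_mult dd_nonneg)
  qed
  also have "\<dots> = (\<integral>\<^sup>+q. \<integral>\<^sup>+w. ennreal (1 - snd q) * ennreal (dd H w) \<partial>J \<partial>Q)"
  proof (rule Jp.nn_integral_fst[symmetric, where f="\<lambda>z. ennreal (1 - snd (fst z)) * ennreal (dd H (snd z))", simplified])
    have [measurable]: "snd \<in> Q \<rightarrow>\<^sub>M borel"
      using measurable_snd[of PA II] by (simp add: sets_Q cong: measurable_cong_sets)
    show "(\<lambda>z. ennreal (1 - snd (fst z)) * ennreal (dd H (snd z))) \<in> borel_measurable (Q \<Otimes>\<^sub>M J)"
      by measurable
  qed
  also have "\<dots> = (\<integral>\<^sup>+q. ennreal (1 - snd q) * (\<integral>\<^sup>+w. ennreal (dd H w) \<partial>J) \<partial>Q)"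
    by (intro nn_integral_cong nn_integral_cmult) measurable
  also have "\<dots> = cc * (\<integral>\<^sup>+w. ennreal (dd H w) \<partial>J)"
    unfolding cc_def
  proof (rule nn_integral_multc)
    have [measurable]: "snd \<in> Q \<rightarrow>\<^sub>M borel"
      using measurable_snd[of PA II] by (simp add: sets_Q cong: measurable_cong_sets)
    show "(\<lambda>q. ennreal (1 - snd q)) \<in> borel_measurable Q" by measurable
  qed
  finally show ?thesis .
qed

lemma cc_lt: "\<exists>cr. cc = ennreal cr \<and> 0 \<le> cr \<and> cr < 1"
proof -
  interpret Pp: prob_space P by (rule P)
  have Xb[measurable]: "X \<in> borel_measurable P" by (rule Xm')
  have iX: "integrable P X"
    by (rule Pp.integrable_const_bound[where B=1]) (auto simp: X01)
  have i1X: "integrable P (\<lambda>\<omega>. 1 - X \<omega>)" using iX by simp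
  have "cc = (\<integral>\<^sup>+\<omega>. ennreal (1 - X \<omega>) \<partial>P)"
    unfolding cc_def Q_def using Q_meas by (subst nn_integral_distr) auto
  also have "\<dots> = ennreal (\<integral>\<omega>. 1 - X \<omega> \<partial>P)"
    by (rule nn_integral_eq_integral[OF i1X]) (auto simp: X01)
  finally have c: "cc = ennreal (\<integral>\<omega>. 1 - X \<omega> \<partial>P)" .
  have e: "(\<integral>\<omega>. 1 - X \<omega> \<partial>P) = 1 - (\<integral>\<omega>. X \<omega> \<partial>P)"
    using iX by (simp add: Pp.prob_space)
  have nn: "0 \<le> (\<integral>\<omega>. 1 - X \<omega> \<partial>P)"
    by (rule integral_nonneg_AE) (auto simp: X01)
  have X0n: "(\<integral>\<omega>. X \<omega> \<partial>P) \<noteq> 0"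
  proof
    assume "(\<integral>\<omega>. X \<omega> \<partial>P) = 0"
    then have "AE \<omega> in P. X \<omega> = 0"
      using integral_nonneg_eq_0_iff_AE[OF iX] by (auto simp: X01)
    then have "measure P {\<omega> \<in> space P. X \<omega> = 0} = 1"
      by (subst Pp.prob_Collect_eq_1) auto
    then show False using X0 by simp
  qed
  have "0 \<le> (\<integral>\<omega>. X \<omega> \<partial>P)" by (rule integral_nonneg_AE) (auto simp: X01)
  then show ?thesis using c e nn X0n by (intro exI[of _ "\<integral>\<omega>. 1 - X \<omega> \<partial>P"]) auto
qed

end


context fx begin

lemma coup_space: "coup L1 L2 J \<Longrightarrow> space J = space (PA \<Otimes>\<^sub>M PA)"
  unfolding coup_def by (metis sets_eq_imp_space_eq)

lemma DJ_le_card: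
  assumes c: "coup L1 L2 J"
  shows "(\<integral>\<^sup>+w. ennreal (dd H w) \<partial>J) \<le> ennreal (real (card H))"
proof -
  have pJ: "prob_space J" using c by (simp add: coup_def)
  have "(\<integral>\<^sup>+w. ennreal (dd H w) \<partial>J) \<le> (\<integral>\<^sup>+w. ennreal (real (card H)) \<partial>J)"
    by (intro nn_integral_mono) (auto simp: coup_space[OF c] dd_le)
  also have "\<dots> = ennreal (real (card H))"
    using pJ by (simp add: prob_space.emeasure_space_1)
  finally show ?thesis .
qed

lemma coup_small:
  assumes f1: "fixd L1" and f2: "fixd L2" and H: "H \<subseteq> sets M" and cr: "cc = ennreal cr" "0 \<le> cr"
  shows "\<exists>J. coup L1 L2 J \<and> (\<integral>\<^sup>+w. ennreal (dd H w) \<partial>J) \<le> ennreal (cr ^ n * real (card H))"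
proof (induction n)
  case 0
  show ?case using coup_0[OF f1 f2] DJ_le_card[OF coup_0[OF f1 f2]] by auto
next
  case (Suc n)
  then obtain J where J: "coup L1 L2 J" "(\<integral>\<^sup>+w. ennreal (dd H w) \<partial>J) \<le> ennreal (cr ^ n * real (card H))"
    by blast
  have "(\<integral>\<^sup>+w. ennreal (dd H w) \<partial>T2 J) = cc * (\<integral>\<^sup>+w. ennreal (dd H w) \<partial>J)"
    using J(1) H by (intro DJ_T2) (auto simp: coup_def)
  also have "\<dots> \<le> ennreal cr * ennreal (cr ^ n * real (card H))"
    unfolding cr(1) by (rule mult_left_mono[OF J(2)]) simp
  also have "\<dots> = ennreal (cr ^ Suc n * real (card H))"
    using cr(2) by (simp add: ennreal_mult[symmetric] mult.assoc)
  finally show ?case using coup_T2[OF J(1) f1 f2] by blast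
qed

definition box :: "('a set \<times> real) set \<Rightarrow> 'a measure set" where
  "box H = {v \<in> space PA. \<forall>p\<in>H. measure v (fst p) < snd p}"

definition sh :: "real \<Rightarrow> ('a set \<times> real) set \<Rightarrow> ('a set \<times> real) set" where
  "sh e H = (\<lambda>p. (fst p, snd p - e)) ` H"

lemma box_sets:
  assumes H: "finite H" "H \<subseteq> sets M \<times> UNIV"
  shows "box H \<in> sets PA"
  unfolding box_def
proof (rule sets.sets_Collect_finite_All[OF _ H(1)])
  fix p assume "p \<in> H"
  then have [measurable]: "fst p \<in> sets M" using H by auto
  show "{v \<in> space PA. measure v (fst p) < snd p} \<in> sets PA" by measurable
qed

lemma sh_finite: "finite H \<Longrightarrow> finite (sh e H)" by (simp add: sh_def)
lemma sh_sub: "H \<subseteq> sets M \<times> UNIV \<Longrightarrow> sh e H \<subseteq> sets M \<times> UNIV" by (auto simp: sh_def)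

end

context fx begin
lemma key:
  assumes c: "coup L1 L2 J" and H: "finite H" "H \<subseteq> sets M \<times> UNIV" and e: "0 < e"
  shows "emeasure L1 (box (sh e H)) \<le> emeasure L2 (box H) + ennreal (1 / e) * (\<integral>\<^sup>+w. ennreal (dd (fst ` H) w) \<partial>J)"
proof -
  have J: "sets J = sets (PA \<Otimes>\<^sub>M PA)" "prob_space J" "distr J PA fst = L1" "distr J PA snd = L2"
    using c by (auto simp: coup_def)
  have sJ: "space J = space (PA \<Otimes>\<^sub>M PA)" by (rule coup_space[OF c])
  have fJ: "fst \<in> J \<rightarrow>\<^sub>M PA" "snd \<in> J \<rightarrow>\<^sub>M PA" using J(1) by (simp_all cong: measurable_cong_sets)
  have Hs: "fst ` H \<subseteq> sets M" using H by auto
  have ddJ[measurable]: "(\<lambda>w. dd (fst ` H) w) \<in> borel_measurable J"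
    using dd_meas[OF Hs] J(1) by (simp cong: measurable_cong_sets)
  let ?B1 = "box (sh e H)" and ?B2 = "box H"
  let ?C = "{w \<in> space J. 1 \<le> ennreal (1 / e) * ennreal (dd (fst ` H) w)}"
  have B1: "?B1 \<in> sets PA" by (rule box_sets[OF sh_finite[OF H(1)] sh_sub[OF H(2)]])
  have B2: "?B2 \<in> sets PA" by (rule box_sets[OF H])
  have C: "?C \<in> sets J" by measurable
  have "emeasure L1 ?B1 = emeasure J (fst -` ?B1 \<inter> space J)"
    using J(3) emeasure_distr[OF fJ(1) B1] by simp
  also have "\<dots> \<le> emeasure J ((snd -` ?B2 \<inter> space J) \<union> ?C)"
  proof (rule emeasure_mono)
    show "fst -` ?B1 \<inter> space J \<subseteq> (snd -` ?B2 \<inter> space J) \<union> ?C"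
    proof
      fix w assume w: "w \<in> fst -` ?B1 \<inter> space J"
      show "w \<in> (snd -` ?B2 \<inter> space J) \<union> ?C"
      proof (cases "e \<le> dd (fst ` H) w")
        case True
        have "1 \<le> dd (fst ` H) w / e" using True e by simp
        then have "ennreal 1 \<le> ennreal (dd (fst ` H) w / e)" by (rule ennreal_leI)
        also have "ennreal (dd (fst ` H) w / e) = ennreal (1 / e) * ennreal (dd (fst ` H) w)"
          using e dd_nonneg[of "fst ` H" w] by (simp add: ennreal_mult[symmetric])
        finally have "1 \<le> ennreal (1 / e) * ennreal (dd (fst ` H) w)" by simp
        moreover have "w \<in> space J" using w by blast
        ultimately have "w \<in> ?C" by blast
        then show ?thesis by blast
      next
        case False
        have wJ: "w \<in> space J" and w1: "fst w \<in> ?B1" using w by blast+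
        have "snd w \<in> ?B2"
          unfolding box_def
        proof (intro CollectI conjI ballI)
          have "w \<in> space (PA \<Otimes>\<^sub>M PA)" using wJ sJ by simp
          then show "snd w \<in> space PA" by (simp add: space_pair_measure mem_Times_iff)
          fix p assume p: "p \<in> H"
          have "(fst p, snd p - e) \<in> sh e H" using p unfolding sh_def by (rule rev_image_eqI) simp
          then have lt: "measure (fst w) (fst p) < snd p - e" using w1 unfolding box_def by fastforce
          have "\<bar>measure (fst w) (fst p) - measure (snd w) (fst p)\<bar> \<le> dd (fst ` H) w"
            unfolding dd_def using p H(1) by (intro member_le_sum) auto
          then show "measure (snd w) (fst p) < snd p"
            using lt False by linarith
        qed
        then have "w \<in> snd -` ?B2 \<inter> space J" using wJ by blast
        then show ?thesis by blast
      qed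
    qed
    show "(snd -` ?B2 \<inter> space J) \<union> ?C \<in> sets J"
      using C measurable_sets[OF fJ(2) B2] by auto
  qed
  also have "\<dots> \<le> emeasure J (snd -` ?B2 \<inter> space J) + emeasure J ?C"
    by (rule emeasure_subadditive[OF measurable_sets[OF fJ(2) B2] C])
  also have "emeasure J (snd -` ?B2 \<inter> space J) = emeasure L2 ?B2"
    using J(4) emeasure_distr[OF fJ(2) B2] by simp
  also have "emeasure J ?C \<le> ennreal (1 / e) * (\<integral>\<^sup>+w. ennreal (dd (fst ` H) w) * indicator (space J) w \<partial>J)"
    by (rule nn_integral_Markov_inequality) auto
  also have "(\<integral>\<^sup>+w. ennreal (dd (fst ` H) w) * indicator (space J) w \<partial>J) = (\<integral>\<^sup>+w. ennreal (dd (fst ` H) w) \<partial>J)"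
    by (intro nn_integral_cong) auto
  finally show ?thesis by (simp add: add_left_mono)
qed

end


context fx begin

lemma fixd_fin: "fixd L \<Longrightarrow> prob_space L" by (simp add: fixd_def)

lemma le_box:
  assumes f1: "fixd L1" and f2: "fixd L2" and H: "finite H" "H \<subseteq> sets M \<times> UNIV" and e: "0 < e"
  shows "measure L1 (box (sh e H)) \<le> measure L2 (box H)"
proof -
  obtain cr where cr: "cc = ennreal cr" "0 \<le> cr" "cr < 1" using cc_lt by blast
  interpret L1p: prob_space L1 by (rule fixd_fin[OF f1])
  interpret L2p: prob_space L2 by (rule fixd_fin[OF f2])
  have Hs: "fst ` H \<subseteq> sets M" using H by auto
  let ?k = "real (card (fst ` H)) / e"
  have bound: "measure L1 (box (sh e H)) \<le> measure L2 (box H) + ?k * cr ^ n" for n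
  proof -
    obtain J where J: "coup L1 L2 J" "(\<integral>\<^sup>+w. ennreal (dd (fst ` H) w) \<partial>J) \<le> ennreal (cr ^ n * real (card (fst ` H)))"
      using coup_small[OF f1 f2 Hs cr(1,2)] by blast
    have "ennreal (measure L1 (box (sh e H))) = emeasure L1 (box (sh e H))"
      by (simp add: L1p.emeasure_eq_measure)
    also have "\<dots> \<le> emeasure L2 (box H) + ennreal (1 / e) * (\<integral>\<^sup>+w. ennreal (dd (fst ` H) w) \<partial>J)"
      by (rule key[OF J(1) H e])
    also have "\<dots> \<le> ennreal (measure L2 (box H)) + ennreal (1 / e) * ennreal (cr ^ n * real (card (fst ` H)))"
      by (intro add_mono mult_left_mono J(2)) (auto simp: L2p.emeasure_eq_measure)
    also have "\<dots> = ennreal (measure L2 (box H) + ?k * cr ^ n)"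
      using e cr(2) by (simp add: ennreal_mult[symmetric] ennreal_plus[symmetric] del: ennreal_plus)
    finally show ?thesis
      using e cr(2) by (subst (asm) ennreal_le_iff) auto
  qed
  have "(\<lambda>n. measure L2 (box H) + ?k * cr ^ n) \<longlonglongrightarrow> measure L2 (box H) + ?k * 0"
    using cr by (intro tendsto_intros LIMSEQ_power_zero) auto
  then show ?thesis
    using bound by (intro LIMSEQ_le_const[where a="measure L1 (box (sh e H))"]) auto
qed

lemma box_union:
  assumes H: "finite H"
  shows "box H = (\<Union>m. box (sh (inverse (real (Suc m))) H))"
proof
  show "box H \<subseteq> (\<Union>m. box (sh (inverse (real (Suc m))) H))"
  proof
    fix v assume v: "v \<in> box H"
    have "\<forall>p\<in>H. eventually (\<lambda>m. inverse (real (Suc m)) < snd p - measure v (fst p)) sequentially"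
    proof
      fix p assume "p \<in> H"
      then have "0 < snd p - measure v (fst p)" using v by (auto simp: box_def)
      then show "eventually (\<lambda>m. inverse (real (Suc m)) < snd p - measure v (fst p)) sequentially"
        using order_tendstoD(2)[OF LIMSEQ_inverse_real_of_nat] by blast
    qed
    then have "eventually (\<lambda>m. \<forall>p\<in>H. inverse (real (Suc m)) < snd p - measure v (fst p)) sequentially"
      by (rule eventually_ball_finite[OF H])
    then obtain m where m: "\<forall>p\<in>H. inverse (real (Suc m)) < snd p - measure v (fst p)"
      by (auto simp: eventually_sequentially)
    have "v \<in> box (sh (inverse (real (Suc m))) H)"
      using v m by (auto simp: box_def sh_def)
    then show "v \<in> (\<Union>m. box (sh (inverse (real (Suc m))) H))" by blast
  qed
  show "(\<Union>m. box (sh (inverse (real (Suc m))) H)) \<subseteq> box H"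
  proof (clarify)
    fix v m assume "v \<in> box (sh (inverse (real (Suc m))) H)"
    then have v: "v \<in> space PA" "\<forall>p\<in>H. measure v (fst p) < snd p - inverse (real (Suc m))"
      by (auto simp: box_def sh_def)
    have pos: "0 < inverse (real (Suc m))" by simp
    show "v \<in> box H" unfolding box_def
    proof (intro CollectI conjI ballI)
      show "v \<in> space PA" by (rule v(1))
      fix p assume "p \<in> H"
      then have "measure v (fst p) < snd p - inverse (real (Suc m))" using v(2) by blast
      then show "measure v (fst p) < snd p" using pos by linarith
    qed
  qed
qed

lemma box_sh_mono:
  assumes ba: "b \<le> a" shows "box (sh a H) \<subseteq> box (sh b H)"
proof
  fix v assume v: "v \<in> box (sh a H)"
  then have v1: "v \<in> space PA" and v2: "\<And>p. p \<in> H \<Longrightarrow> measure v (fst p) < snd p - a"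
    unfolding box_def sh_def by auto
  show "v \<in> box (sh b H)" unfolding box_def
  proof (intro CollectI conjI ballI)
    show "v \<in> space PA" by (rule v1)
    fix q assume "q \<in> sh b H"
    then obtain p where p: "p \<in> H" "q = (fst p, snd p - b)" unfolding sh_def by blast
    show "measure v (fst q) < snd q" using v2[OF p(1)] p(2) ba by simp
  qed
qed

lemma box_incseq: "incseq (\<lambda>m. box (sh (inverse (real (Suc m))) H))"
proof (rule incseq_SucI)
  fix m
  have "inverse (real (Suc (Suc m))) \<le> inverse (real (Suc m))"
    by (simp add: le_imp_inverse_le)
  then show "box (sh (inverse (real (Suc m))) H) \<subseteq> box (sh (inverse (real (Suc (Suc m)))) H)"
    by (rule box_sh_mono)
qed

lemma box_le:
  assumes f1: "fixd L1" and f2: "fixd L2" and H: "finite H" "H \<subseteq> sets M \<times> UNIV"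
  shows "measure L1 (box H) \<le> measure L2 (box H)"
proof -
  interpret L1p: prob_space L1 by (rule fixd_fin[OF f1])
  have sL1: "sets L1 = sets PA" using f1 by (simp add: fixd_def)
  have "(\<lambda>m. measure L1 (box (sh (inverse (real (Suc m))) H))) \<longlonglongrightarrow> measure L1 (\<Union>m. box (sh (inverse (real (Suc m))) H))"
  proof (rule L1p.finite_Lim_measure_incseq[OF _ box_incseq])
    show "range (\<lambda>m. box (sh (inverse (real (Suc m))) H)) \<subseteq> sets L1"
      using box_sets[OF sh_finite[OF H(1)] sh_sub[OF H(2)]] sL1 by blast
  qed
  moreover have eq: "(\<Union>m. box (sh (inverse (real (Suc m))) H)) = box H"
    by (rule box_union[OF H(1), symmetric])
  ultimately have lim: "(\<lambda>m. measure L1 (box (sh (inverse (real (Suc m))) H))) \<longlonglongrightarrow> measure L1 (box H)"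
    by argo
  show ?thesis
  proof (rule LIMSEQ_le_const2[OF lim], intro exI allI impI)
    fix n show "measure L1 (box (sh (inverse (real (Suc n))) H)) \<le> measure L2 (box H)"
      by (rule le_box[OF f1 f2 H]) simp
  qed
qed


end


context fx begin

definition "EE = box ` {H. finite H \<and> H \<subseteq> sets M \<times> UNIV}"

lemma box_Int: "box H1 \<inter> box H2 = box (H1 \<union> H2)"
  unfolding box_def by blast

lemma EE_Int: "Int_stable EE"
  unfolding Int_stable_def
proof (intro ballI)
  fix a b assume "a \<in> EE" "b \<in> EE"
  then obtain H1 H2 where "finite H1" "H1 \<subseteq> sets M \<times> UNIV" "a = box H1"
    "finite H2" "H2 \<subseteq> sets M \<times> UNIV" "b = box H2" unfolding EE_def by blast
  then have "a \<inter> b = box (H1 \<union> H2)" "finite (H1 \<union> H2)" "H1 \<union> H2 \<subseteq> sets M \<times> UNIV"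
    using box_Int by auto
  then show "a \<inter> b \<in> EE" unfolding EE_def by blast
qed

lemma EE_Pow: "EE \<subseteq> Pow (space PA)"
  unfolding EE_def box_def by blast

lemma EE_sets: "EE \<subseteq> sets PA"
proof
  fix B assume "B \<in> EE"
  then obtain H where "finite H" "H \<subseteq> sets M \<times> UNIV" "B = box H" unfolding EE_def by blast
  then show "B \<in> sets PA" using box_sets by blast
qed

lemma sets_PA_EE: "sets PA = sigma_sets (space PA) EE"
proof
  show "sigma_sets (space PA) EE \<subseteq> sets PA"
    by (rule sets.sigma_sets_subset[OF EE_sets])
  let ?S = "sigma (space PA) EE"
  have sS: "sets ?S = sigma_sets (space PA) EE" by (rule sets_measure_of[OF EE_Pow])
  have spS: "space ?S = space PA" by (rule space_measure_of[OF EE_Pow])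
  have idm: "(\<lambda>v. v) \<in> ?S \<rightarrow>\<^sub>M PA"
  proof (rule measurable_prob_algebra_generated[where \<Omega>="space M" and G="sets M"])
    show "sets M = sigma_sets (space M) (sets M)" by (simp add: sets.sigma_sets_eq)
    show "Int_stable (sets M)" by (auto simp: Int_stable_def)
    show "sets M \<subseteq> Pow (space M)" by (rule sets.space_closed)
    fix v assume "v \<in> space ?S"
    then have "v \<in> space PA" using spS by simp
    then show "prob_space v" "sets v = sets M" unfolding space_prob_algebra by blast+
  next
    fix A assume A: "A \<in> sets M"
    have "(\<lambda>v. measure v A) \<in> borel_measurable ?S"
    proof (rule borel_measurable_iff_less[THEN iffD2], rule allI)
      fix a
      have "{v \<in> space ?S. measure v A < a} = box {(A, a)}"
        unfolding spS box_def by simp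
      also have "\<dots> \<in> EE" using A unfolding EE_def by (intro imageI) simp
      finally show "{v \<in> space ?S. measure v A < a} \<in> sets ?S"
        unfolding sS by (rule sigma_sets.Basic)
    qed
    then have m: "(\<lambda>v. ennreal (measure v A)) \<in> borel_measurable ?S" by (rule measurable_compose[OF _ measurable_ennreal])
    show "(\<lambda>v. emeasure v A) \<in> borel_measurable ?S"
    proof (rule measurable_cong[THEN iffD1, OF _ m])
      fix v assume "v \<in> space ?S"
      then have "v \<in> space PA" using spS by simp
      then have "prob_space v" unfolding space_prob_algebra by blast
      then show "ennreal (measure v A) = emeasure v A"
        by (simp add: prob_space.finite_measure finite_measure.emeasure_eq_measure)
    qed
  qed
  show "sets PA \<subseteq> sigma_sets (space PA) EE"
  proof
    fix S assume S: "S \<in> sets PA"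
    have "(\<lambda>v. v) -` S \<inter> space ?S \<in> sets ?S" by (rule measurable_sets[OF idm S])
    moreover have "(\<lambda>v. v) -` S \<inter> space ?S = S" using sets.sets_into_space[OF S] spS by blast
    ultimately show "S \<in> sigma_sets (space PA) EE" using sS by simp
  qed
qed

lemma fixd_unique:
  assumes f1: "fixd L1" and f2: "fixd L2" shows "L1 = L2"
proof (rule measure_eqI_generator_eq[OF EE_Int EE_Pow])
  interpret L1p: prob_space L1 by (rule fixd_fin[OF f1])
  interpret L2p: prob_space L2 by (rule fixd_fin[OF f2])
  show "sets L1 = sigma_sets (space PA) EE" "sets L2 = sigma_sets (space PA) EE"
    using f1 f2 unfolding fixd_def sets_PA_EE by blast+
  fix B assume "B \<in> EE"
  then obtain H where H: "finite H" "H \<subseteq> sets M \<times> UNIV" and B: "B = box H"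
    unfolding EE_def by blast
  have "measure L1 B = measure L2 B"
    using box_le[OF f1 f2 H] box_le[OF f2 f1 H] unfolding B by linarith
  then show "emeasure L1 B = emeasure L2 B"
    by (simp add: L1p.emeasure_eq_measure L2p.emeasure_eq_measure)
next
  have "box {} = space PA" unfolding box_def by blast
  moreover have "box {} \<in> EE" unfolding EE_def by (intro imageI) simp
  ultimately show "range (\<lambda>i. space PA) \<subseteq> EE" by auto
  show "(\<Union>i. space PA) = space PA" by simp
  interpret L1p: prob_space L1 by (rule fixd_fin[OF f1])
  show "emeasure L1 (space PA) \<noteq> \<infinity>" by (simp add: L1p.emeasure_eq_measure)
qed

lemma ex1_fixd: "\<exists>!L. fixd L"
proof
  show "fixd Lx" unfolding fixd_def using Lx_prob Lx_sets Lx_fixed by blast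
  fix L assume "fixd L" then show "L = Lx" using fixd_unique \<open>fixd Lx\<close> by blast
qed

end

theorem mainTheorem6:
  fixes M :: "'a measure" and P :: "'w measure"
    and \<eta> :: "'w \<Rightarrow> 'a measure" and X :: "'w \<Rightarrow> real"
  assumes "prob_space P"
    and "\<eta> \<in> measurable P (prob_algebra M)"
    and "X \<in> measurable P (restrict_space borel {0..1})"
    and "measure P {\<omega> \<in> space P. X \<omega> = 0} < 1"
  shows "\<exists>!L. prob_space L \<and> sets L = sets (prob_algebra M) \<and>
           L = distr (distr P (prob_algebra M \<Otimes>\<^sub>M restrict_space borel {0..1}) (\<lambda>\<omega>. (\<eta> \<omega>, X \<omega>)) \<Otimes>\<^sub>M L)
                     (prob_algebra M) (\<lambda>((e, x), v). mix_measure M x e v)"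
proof -
  interpret fx M P \<eta> X by (rule fx.intro) (rule assms)+
  show ?thesis using ex1_fixd unfolding fixd_def Q_def F_def .
qed


end
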